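(* Let $z\in\mathcal F_\infty$. If $v,w\in\mathcal A_{\mathrm{FPF}}(z)$ and $v<_{\mathcal A}w$, then $\lambda(v)<\lambda(w)$ in the dominance order.
   Context: Let $S_\infty$ be the group of finitely supported permutations of $\mathbb P$, and let $\ell(w)$ be the number of inversions of $w$. Let $\Theta(i)=i-(-1)^i$ and $\mathcal F_\infty=\{w^{-1}\Theta w:w\in S_\infty\}$. Let $\mathcal A_{\mathrm{FPF}}(z)$ be the set of minimal-length $w$ with $z=w^{-1}\Theta w$. Define $<_{\mathcal A}$ on $S_\infty$ as the transitive relation generated by the following rule. Set $v<_{\mathcal A}w$ when the one-line representation of $w^{-1}$ is obtained from that of $v^{-1}$ by replacing a consecutive subsequence $a\,d\,b\,c$, beginning at an odd position and with $a<b<c<d$, by $b\,c\,a\,d$. The code of $w\in S_\infty$ is $c(w)=(c_1,c_2,\dots)$ with $c_i=\#\{j>i:w(j)<w(i)\}$. The shape $\lambda(w)$ is the partition obtained by sorting $c(w)$. *)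

theory Defs
  imports Main
begin

text \<open>Permutations of the positive integers are modelled as functions nat => nat
  that fix 0, are bijective and have finite support.\<close>

definition S_inf :: "(nat \<Rightarrow> nat) set" where
  "S_inf = {w. bij w \<and> w 0 = 0 \<and> finite {i. w i \<noteq> i}}"

definition Theta :: "nat \<Rightarrow> nat" where
  "Theta i = (if i = 0 then 0 else if odd i then i + 1 else i - 1)"

definition inv_len :: "(nat \<Rightarrow> nat) \<Rightarrow> nat" where
  "inv_len w = card {(i, j). 0 < i \<and> i < j \<and> w j < w i}"

definition twist :: "(nat \<Rightarrow> nat) \<Rightarrow> (nat \<Rightarrow> nat)" where
  "twist w = inv w \<circ> Theta \<circ> w"

definition F_inf :: "(nat \<Rightarrow> nat) set" where
  "F_inf = {twist w | w. w \<in> S_inf}"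

definition A_FPF :: "(nat \<Rightarrow> nat) \<Rightarrow> (nat \<Rightarrow> nat) set" where
  "A_FPF z = {w \<in> S_inf. twist w = z \<and>
      (\<forall>u \<in> S_inf. twist u = z \<longrightarrow> inv_len w \<le> inv_len u)}"

text \<open>Covering step: the one-line word of inv w arises from that of inv v by
  replacing a consecutive a d b c starting at odd position i with b c a d,
  where a < b < c < d.\<close>
definition A_step :: "(nat \<Rightarrow> nat) \<Rightarrow> (nat \<Rightarrow> nat) \<Rightarrow> bool" where
  "A_step v w \<longleftrightarrow> v \<in> S_inf \<and> w \<in> S_inf \<and>
     (\<exists>i. odd i \<and>
        (let a = inv v i; d = inv v (i+1); b = inv v (i+2); c = inv v (i+3) in
          a < b \<and> b < c \<and> c < d \<and>
          inv w i = b \<and> inv w (i+1) = c \<and> inv w (i+2) = a \<and> inv w (i+3) = d \<and>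
          (\<forall>j. j \<notin> {i, i+1, i+2, i+3} \<longrightarrow> inv w j = inv v j)))"

definition A_less :: "(nat \<Rightarrow> nat) \<Rightarrow> (nat \<Rightarrow> nat) \<Rightarrow> bool" where
  "A_less = tranclp A_step"

definition code :: "(nat \<Rightarrow> nat) \<Rightarrow> nat \<Rightarrow> nat" where
  "code w i = card {j. i < j \<and> w j < w i}"

definition supp_bound :: "(nat \<Rightarrow> nat) \<Rightarrow> nat" where
  "supp_bound w = (if {i. w i \<noteq> i} = {} then 1 else Suc (Max {i. w i \<noteq> i}))"

text \<open>Shape: the nonzero code entries c_1, c_2, ... sorted into weakly decreasing order
  (all c_i with i beyond the support vanish).\<close>
definition shape :: "(nat \<Rightarrow> nat) \<Rightarrow> nat list" where
  "shape w = rev (sort (filter (\<lambda>x. x \<noteq> 0) (map (code w) [1..<supp_bound w])))"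

definition dominates_le :: "nat list \<Rightarrow> nat list \<Rightarrow> bool" where
  "dominates_le lam mu \<longleftrightarrow> sum_list lam = sum_list mu \<and>
     (\<forall>k. sum_list (take k lam) \<le> sum_list (take k mu))"

definition dominates_less :: "nat list \<Rightarrow> nat list \<Rightarrow> bool" where
  "dominates_less lam mu \<longleftrightarrow> dominates_le lam mu \<and> lam \<noteq> mu"

end

theory Submission
  imports Defs "HOL-Library.Multiset"
begin



definition cnt :: "nat multiset \<Rightarrow> nat \<Rightarrow> nat" where
  "cnt M t = size (filter_mset (\<lambda>x. t \<le> x) M)"

lemma sum_list_count:
  "(\<forall>x\<in>set xs. x \<le> B) \<Longrightarrow> sum_list xs = (\<Sum>t=1..B. length (filter (\<lambda>x. t \<le> x) xs))"
proof (induction xs)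
  case Nil then show ?case by simp
next
  case (Cons x xs)
  have "(\<Sum>t=1..B. length (filter (\<lambda>y. t \<le> y) (x#xs)))
       = (\<Sum>t=1..B. (if t \<le> x then 1 else 0) + length (filter (\<lambda>y. t \<le> y) xs))"
    by (rule sum.cong) auto
  also have "\<dots> = (\<Sum>t=1..B. (if t \<le> x then 1 else 0::nat)) + (\<Sum>t=1..B. length (filter (\<lambda>y. t \<le> y) xs))"
    by (rule sum.distrib)
  also have "(\<Sum>t=1..B. (if t \<le> x then 1 else 0::nat)) = card {t\<in>{1..B}. t \<le> x}"
    by (simp add: sum.inter_filter[symmetric])
  also have "{t\<in>{1..B}. t \<le> x} = {1..x}" using Cons.prems by auto
  finally show ?case using Cons by simp
qed

lemma desc_take_filter:
  "sorted_wrt (\<ge>) (L::nat list) \<Longrightarrow> length (filter (\<lambda>x. t \<le> x) (take k L)) = min k (length (filter (\<lambda>x. t \<le> x) L))"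
proof (induction L arbitrary: k)
  case Nil then show ?case by simp
next
  case (Cons x L)
  show ?case
  proof (cases k)
    case 0 then show ?thesis by simp
  next
    case (Suc k')
    show ?thesis
    proof (cases "t \<le> x")
      case True then show ?thesis using Cons Suc by simp
    next
      case False
      have "\<forall>y\<in>set L. y \<le> x" using Cons.prems by simp
      have nt: "\<forall>y\<in>set L. \<not> t \<le> y"
      proof
        fix y assume "y \<in> set L"
        with \<open>\<forall>y\<in>set L. y \<le> x\<close> have "y \<le> x" by blast
        then show "\<not> t \<le> y" using False by simp
      qed
      have "filter (\<lambda>x. t \<le> x) L = []" using nt by (simp add: filter_empty_conv)
      moreover have "filter (\<lambda>x. t \<le> x) (take k' L) = []" using nt
        by (auto simp: filter_empty_conv dest: in_set_takeD)
      ultimately show ?thesis using False Suc by simp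
    qed
  qed
qed

definition dsl :: "nat multiset \<Rightarrow> nat list" where
  "dsl M = rev (sorted_list_of_multiset M)"

lemma topk:
  assumes "\<forall>x\<in>#M. x \<le> B"
  shows "sum_list (take k (dsl M)) = (\<Sum>t=1..B. min k (cnt M t))"
proof -
  have srt: "sorted_wrt (\<ge>) (dsl M)" unfolding dsl_def
    by (simp add: sorted_wrt_rev sorted_sorted_list_of_multiset)
  have "\<forall>x\<in>set (take k (dsl M)). x \<le> B" using assms
    by (auto simp: dsl_def dest!: in_set_takeD)
  then have "sum_list (take k (dsl M)) = (\<Sum>t=1..B. length (filter (\<lambda>x. t \<le> x) (take k (dsl M))))"
    by (rule sum_list_count)
  also have "\<dots> = (\<Sum>t=1..B. min k (length (filter (\<lambda>x. t \<le> x) (dsl M))))"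
    using desc_take_filter[OF srt] by simp
  also have "\<dots> = (\<Sum>t=1..B. min k (cnt M t))"
  proof -
    have "length (filter (\<lambda>x. t \<le> x) (dsl M)) = cnt M t" for t
      unfolding cnt_def dsl_def
      by (metis mset_filter mset_rev mset_sorted_list_of_multiset size_mset)
    then show ?thesis by simp
  qed
  finally show ?thesis .
qed

lemma cnt_add_mset: "cnt (add_mset x R) t = cnt R t + (if t \<le> x then 1 else 0)"
  by (simp add: cnt_def)

lemma cnt_add2: "cnt (R + {#x, y#}) t = cnt R t + (if t \<le> x then 1 else 0) + (if t \<le> y then 1 else 0)"
  by (simp add: cnt_def)

lemma cnt_mono: "t \<le> s \<Longrightarrow> cnt R s \<le> cnt R t"
  unfolding cnt_def by (intro size_mset_mono filter_mset_mono_strong) auto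

lemma move:
  assumes "1 \<le> x" "x \<le> y + 1" "y + 1 \<le> B"
  shows "(\<Sum>t=1..B. min k (cnt (R + {#x, y#}) t)) \<le> (\<Sum>t=1..B. min k (cnt (R + {#x - 1, y + 1#}) t))"
proof (cases "x = y + 1")
  case True
  then have xy: "x - 1 = y" by simp
  have eqM: "R + {#x, y#} = R + {#x - 1, y + 1#}" unfolding xy True by (simp add: add_mset_commute)
  show ?thesis unfolding eqM by (rule order_refl)
next
  case False
  let ?f = "\<lambda>t. min k (cnt (R + {#x, y#}) t)"
  let ?g = "\<lambda>t. min k (cnt (R + {#x - 1, y + 1#}) t)"
  define S where "S = {1..B} - {x} - {y+1}"
  have fin: "finite S" by (simp add: S_def)
  have x1: "x \<in> {1..B}" "y+1 \<in> {1..B} - {x}" using assms False by auto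
  have dec: "sum h {1..B} = h x + h (y+1) + sum h S" for h :: "nat \<Rightarrow> nat"
    using sum.remove[OF _ x1(1), of h] sum.remove[OF _ x1(2), of h] by (simp add: S_def)
  have eq: "?f t = ?g t" if "t \<in> S" for t
    using that assms by (auto simp: S_def cnt_add_mset)
  have "cnt R (y+1) \<le> cnt R x" by (rule cnt_mono) (use assms in simp)
  then have i1: "?f x + ?f (y+1) \<le> ?g x + ?g (y+1)"
    using assms False by (simp add: cnt_add_mset)
  have i2: "sum ?f S = sum ?g S" using eq by (rule sum.cong[OF refl])
  have A: "sum ?f {1..B} = ?f x + ?f (y+1) + sum ?f S" by (rule dec)
  have B: "sum ?g {1..B} = ?g x + ?g (y+1) + sum ?g S" by (rule dec)
  show ?thesis using A B i1 i2 by linarith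
qed

lemma cnt_filter_nz: "1 \<le> t \<Longrightarrow> cnt (filter_mset (\<lambda>x. x \<noteq> 0) M) t = cnt M t"
  unfolding cnt_def by (simp add: filter_filter_mset) (rule arg_cong[where f=size], rule filter_mset_cong, auto)

lemma sum_filter_nz: "sum_mset (filter_mset (\<lambda>x. x \<noteq> 0) M) = sum_mset (M::nat multiset)"
  by (induction M) auto

lemma sq_filter_nz: "sum_mset (image_mset (\<lambda>x. x*x) (filter_mset (\<lambda>x. x \<noteq> 0) M)) = sum_mset (image_mset (\<lambda>x. x*x) (M::nat multiset))"
  by (induction M) auto

lemma le_sum_mset: "x \<in># M \<Longrightarrow> x \<le> sum_mset (M::nat multiset)"
proof -
  assume "x \<in># M"
  then obtain N where "M = add_mset x N" by (blast dest: multi_member_split)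
  then show ?thesis by simp
qed




lemma dsl_mset[simp]: "mset (dsl M) = M"
  by (simp add: dsl_def)

lemma dsl_sum: "sum_list (dsl M) = sum_mset M"
  by (metis dsl_mset sum_mset_sum_list)

lemma dsl_sq: "sum_list (map f (dsl M)) = sum_mset (image_mset f M)"
  by (metis dsl_mset mset_map sum_mset_sum_list)

lemma final:
  fixes ea eb ec ed :: nat
  assumes "eb \<le> ea" "ec \<le> ea"
    and Mv: "Mv = R + {#ea, eb+1, ec+1, ed#}" and Mw: "Mw = R + {#ea+2, eb, ec, ed#}"
  shows "dominates_le (dsl (filter_mset (\<lambda>x. x \<noteq> 0) Mv)) (dsl (filter_mset (\<lambda>x. x \<noteq> 0) Mw))
     \<and> sum_list (map (\<lambda>x. x*x) (dsl (filter_mset (\<lambda>x. x \<noteq> 0) Mv)))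
       < sum_list (map (\<lambda>x. x*x) (dsl (filter_mset (\<lambda>x. x \<noteq> 0) Mw)))"
proof -
  let ?nz = "\<lambda>x::nat. x \<noteq> 0"
  define B where "B = sum_mset Mw"
  have sumeq: "sum_mset Mv = sum_mset Mw" using Mv Mw by simp
  have bv: "\<forall>x\<in>#filter_mset ?nz Mv. x \<le> B"
    by (metis B_def sumeq le_sum_mset sum_filter_nz)
  have bw: "\<forall>x\<in>#filter_mset ?nz Mw. x \<le> B"
    by (metis B_def le_sum_mset sum_filter_nz)
  have eaB: "ea + 2 \<le> B" unfolding B_def using le_sum_mset[of "ea+2" Mw] Mw by simp
  have cf: "(\<Sum>t=1..B. min k (cnt (filter_mset ?nz M) t)) = (\<Sum>t=1..B. min k (cnt M t))" for k M
    by (intro sum.cong refl) (metis atLeastAtMost_iff cnt_filter_nz)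
  have dom: "sum_list (take k (dsl (filter_mset ?nz Mv))) \<le> sum_list (take k (dsl (filter_mset ?nz Mw)))" for k
  proof -
    have e1: "Mv = (R + {#ed, ec+1#}) + {#eb+1, ea#}" using Mv by (simp add: add_mset_commute)
    have e2: "(R + {#ed, ec+1#}) + {#eb+1-1, ea+1#} = (R + {#ed, eb#}) + {#ec+1, ea+1#}"
      by (simp add: add_mset_commute)
    have e3: "(R + {#ed, eb#}) + {#ec+1-1, ea+1+1#} = Mw" using Mw by (simp add: add_mset_commute)
    have "sum_list (take k (dsl (filter_mset ?nz Mv))) = (\<Sum>t=1..B. min k (cnt Mv t))"
      using topk[OF bv] cf by simp
    also have "\<dots> \<le> (\<Sum>t=1..B. min k (cnt ((R + {#ed, ec+1#}) + {#eb+1-1, ea+1#}) t))"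
      unfolding e1 by (rule move) (use assms eaB in auto)
    also have "\<dots> \<le> (\<Sum>t=1..B. min k (cnt ((R + {#ed, eb#}) + {#ec+1-1, ea+1+1#}) t))"
      unfolding e2 by (rule move) (use assms eaB in auto)
    also have "\<dots> = sum_list (take k (dsl (filter_mset ?nz Mw)))"
      unfolding e3 using topk[OF bw] cf by simp
    finally show ?thesis .
  qed
  have s: "sum_list (dsl (filter_mset ?nz Mv)) = sum_list (dsl (filter_mset ?nz Mw))"
    by (metis dsl_sum sum_filter_nz sumeq)
  have q: "sum_list (map (\<lambda>x. x*x) (dsl (filter_mset ?nz Mv)))
       < sum_list (map (\<lambda>x. x*x) (dsl (filter_mset ?nz Mw)))"
  proof -
    have "ea*ea + (eb+1)*(eb+1) + (ec+1)*(ec+1) < (ea+2)*(ea+2) + eb*eb + ec*ec"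
      using assms(1,2) by (simp add: algebra_simps)
    then show ?thesis using Mv Mw by (simp add: dsl_sq sq_filter_nz algebra_simps)
  qed
  show ?thesis using dom s q by (simp add: dominates_le_def)
qed




lemma fixed_beyond:
  assumes "u \<in> S_inf" "supp_bound u \<le> j" shows "u j = j"
proof (rule ccontr)
  assume ne: "u j \<noteq> j"
  have fin: "finite {i. u i \<noteq> i}" using assms(1) by (simp add: S_inf_def)
  have "j \<in> {i. u i \<noteq> i}" using ne by simp
  then have "j \<le> Max {i. u i \<noteq> i}" using fin by (rule Max_ge[rotated])
  moreover have "{i. u i \<noteq> i} \<noteq> {}" using ne by auto
  ultimately show False using assms(2) unfolding supp_bound_def by (auto split: if_splits)
qed

lemma code_zero:
  assumes "u \<in> S_inf" "supp_bound u \<le> x" shows "code u x = 0"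
proof -
  have "{j. x < j \<and> u j < u x} = {}"
    using fixed_beyond[OF assms(1)] assms(2) by auto
  then show ?thesis unfolding code_def by (metis card.empty)
qed

lemma shape_eq:
  assumes "u \<in> S_inf" "supp_bound u \<le> N"
  shows "shape u = dsl (filter_mset (\<lambda>x. x \<noteq> 0) (image_mset (code u) (mset_set {1..<N})))"
proof -
  have "filter_mset (\<lambda>x. x \<noteq> 0) (image_mset (code u) (mset_set {1..<N}))
      = image_mset (code u) (mset_set {x\<in>{1..<N}. code u x \<noteq> 0})"
    by (simp add: filter_mset_image_mset)
  also have "{x\<in>{1..<N}. code u x \<noteq> 0} = {x\<in>{1..<supp_bound u}. code u x \<noteq> 0}"
    using code_zero[OF assms(1)] assms(2) by (auto simp: not_less) (metis not_le less_irrefl)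
  also have "image_mset (code u) (mset_set \<dots>) = filter_mset (\<lambda>x. x \<noteq> 0) (image_mset (code u) (mset_set {1..<supp_bound u}))"
    by (simp add: filter_mset_image_mset)
  finally have *: "filter_mset (\<lambda>x. x \<noteq> 0) (image_mset (code u) (mset_set {1..<N})) =
      mset (filter (\<lambda>x. x \<noteq> 0) (map (code u) [1..<supp_bound u]))"
    by (simp add: mset_filter mset_upt)
  show ?thesis unfolding * shape_def dsl_def sorted_list_of_multiset_mset ..
qed

lemma code_in:
  assumes "inj u" "k \<in> P" "finite P" "\<forall>j\<in>P. i \<le> u j \<and> u j \<le> i+3"
    "\<forall>j. j \<notin> P \<longrightarrow> u j < i \<or> i+3 < u j"
  shows "code u k = card {j. j \<notin> P \<and> k < j \<and> u j < i} + card {j\<in>P. k < j \<and> u j < u k}"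
proof -
  have uk: "i \<le> u k" "u k \<le> i+3" using assms(2,4) by auto
  have eq: "{j. k < j \<and> u j < u k} = {j. j \<notin> P \<and> k < j \<and> u j < i} \<union> {j\<in>P. k < j \<and> u j < u k}"
  proof -
    have "j \<notin> P \<Longrightarrow> u j < u k \<longleftrightarrow> u j < i" for j using assms(5) uk by force
    then show ?thesis by auto
  qed
  have f1: "finite {j. j \<notin> P \<and> k < j \<and> u j < i}"
    by (rule finite_subset[OF _ finite_vimageI[OF finite_lessThan[of i] assms(1)]]) auto
  have f2: "finite {j\<in>P. k < j \<and> u j < u k}" using assms(3) by simp
  show ?thesis unfolding code_def eq by (rule card_Un_disjoint[OF f1 f2]) auto
qed

lemma code_out:
  assumes "k \<notin> P" "\<forall>j\<in>P. i \<le> u j \<and> u j \<le> i+3 \<and> i \<le> v j \<and> v j \<le> i+3"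
    "\<forall>j. j \<notin> P \<longrightarrow> u j = v j \<and> (v j < i \<or> i+3 < v j)"
  shows "code u k = code v k"
proof -
  have "u j < u k \<longleftrightarrow> v j < v k" for j
  proof (cases "j \<in> P")
    case True then show ?thesis using assms by force
  next
    case False then show ?thesis using assms by metis
  qed
  then show ?thesis by (simp add: code_def)
qed




lemma step:
  assumes "A_step v w"
  shows "dominates_le (shape v) (shape w) \<and>
         sum_list (map (\<lambda>x. x*x) (shape v)) < sum_list (map (\<lambda>x. x*x) (shape w))"
proof -
  from assms obtain i where vS: "v \<in> S_inf" and wS: "w \<in> S_inf" and oi: "odd i"
    and lt: "inv v i < inv v (i+2)" "inv v (i+2) < inv v (i+3)" "inv v (i+3) < inv v (i+1)"
    and wi: "inv w i = inv v (i+2)" "inv w (i+1) = inv v (i+3)" "inv w (i+2) = inv v i" "inv w (i+3) = inv v (i+1)"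
    and rest: "\<forall>j. j \<notin> {i, i+1, i+2, i+3} \<longrightarrow> inv w j = inv v j"
    unfolding A_step_def Let_def by blast
  define a where "a = inv v i"
  define d where "d = inv v (i+1)"
  define b where "b = inv v (i+2)"
  define c where "c = inv v (i+3)"
  have bv: "bij v" and v0: "v 0 = 0" using vS by (auto simp: S_inf_def)
  have bw: "bij w" using wS by (auto simp: S_inf_def)
  have vinv: "v (inv v y) = y" for y using surj_f_inv_f[OF bij_is_surj[OF bv]] .
  have winv: "w (inv w y) = y" for y using surj_f_inv_f[OF bij_is_surj[OF bw]] .
  have invv: "inv v (v x) = x" for x using inv_f_f[OF bij_is_inj[OF bv]] .
  have injv: "inj v" and injw: "inj w" using bv bw bij_is_inj by auto
  have va: "v a = i" and vd: "v d = i+1" and vb: "v b = i+2" and vc: "v c = i+3"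
    by (simp_all add: a_def b_def c_def d_def vinv)
  have wb: "w b = i" using winv[of i] wi(1) by (simp add: b_def)
  have wc: "w c = i+1" using winv[of "i+1"] wi(2) by (simp add: c_def)
  have wa: "w a = i+2" using winv[of "i+2"] wi(3) by (simp add: a_def)
  have wd: "w d = i+3" using winv[of "i+3"] wi(4) by (simp add: d_def)
  have ab: "a < b" and bc: "b < c" and cd: "c < d" using lt by (simp_all add: a_def b_def c_def d_def)
  have i1: "1 \<le> i" using oi by (cases i) auto
  have a1: "1 \<le> a" proof (rule ccontr)
    assume "\<not> 1 \<le> a" then have "a = 0" by simp
    then show False using va v0 i1 by simp
  qed
  define P where "P = {a, b, c, d}"
  have finP: "finite P" by (simp add: P_def)
  have offv: "\<forall>j. j \<notin> P \<longrightarrow> v j < i \<or> i+3 < v j"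
  proof (intro allI impI)
    fix j assume jP: "j \<notin> P"
    show "v j < i \<or> i+3 < v j"
    proof (rule ccontr)
      assume "\<not> (v j < i \<or> i+3 < v j)"
      then have "v j = i \<or> v j = i+1 \<or> v j = i+2 \<or> v j = i+3" by linarith
      then have "j = a \<or> j = d \<or> j = b \<or> j = c"
        using invv[of j] by (auto simp: a_def b_def c_def d_def)
      then show False using jP by (auto simp: P_def)
    qed
  qed
  have offw: "\<forall>j. j \<notin> P \<longrightarrow> w j = v j"
  proof (intro allI impI)
    fix j assume jP: "j \<notin> P"
    have "v j \<notin> {i, i+1, i+2, i+3}" using offv jP by auto
    then have "inv w (v j) = inv v (v j)" using rest by blast
    then have "inv w (v j) = j" by (simp add: invv)
    then show "w j = v j" using winv[of "v j"] by simp
  qed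
  have inPv: "\<forall>j\<in>P. i \<le> v j \<and> v j \<le> i+3" by (auto simp: P_def va vb vc vd)
  have inPw: "\<forall>j\<in>P. i \<le> w j \<and> w j \<le> i+3" by (auto simp: P_def wa wb wc wd)
  have offw': "\<forall>j. j \<notin> P \<longrightarrow> w j < i \<or> i+3 < w j" using offv offw by simp
  define E where "E k = {j. j \<notin> P \<and> k < j \<and> v j < i}" for k
  have Ew: "{j. j \<notin> P \<and> k < j \<and> w j < i} = E k" for k using offw by (auto simp: E_def)
  have finE: "finite (E k)" for k
    by (rule finite_subset[OF _ finite_vimageI[OF finite_lessThan[of i] injv]]) (auto simp: E_def)
  have Emono: "k \<le> k' \<Longrightarrow> card (E k') \<le> card (E k)" for k k'
    by (rule card_mono[OF finE]) (auto simp: E_def)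
  have cv: "code v k = card (E k) + card {j\<in>P. k < j \<and> v j < v k}" if "k \<in> P" for k
    using code_in[OF injv that finP inPv offv] by (simp add: E_def)
  have cw: "code w k = card (E k) + card {j\<in>P. k < j \<and> w j < w k}" if "k \<in> P" for k
    using code_in[OF injw that finP inPw offw'] Ew by simp
  have cva: "code v a = card (E a)"
  proof -
    have "{j\<in>P. a < j \<and> v j < v a} = {}" using ab bc cd by (auto simp: P_def va vb vc vd)
    then show ?thesis using cv[of a] by (simp add: P_def)
  qed
  have cvb: "code v b = card (E b) + 1"
  proof -
    have "{j\<in>P. b < j \<and> v j < v b} = {d}" using ab bc cd by (auto simp: P_def va vb vc vd)
    then show ?thesis using cv[of b] by (simp add: P_def)
  qed
  have cvc: "code v c = card (E c) + 1"
  proof -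
    have "{j\<in>P. c < j \<and> v j < v c} = {d}" using ab bc cd by (auto simp: P_def va vb vc vd)
    then show ?thesis using cv[of c] by (simp add: P_def)
  qed
  have cvd: "code v d = card (E d)"
  proof -
    have "{j\<in>P. d < j \<and> v j < v d} = {}" using ab bc cd by (auto simp: P_def va vb vc vd)
    then show ?thesis using cv[of d] by (simp add: P_def)
  qed
  have cwa: "code w a = card (E a) + 2"
  proof -
    have "{j\<in>P. a < j \<and> w j < w a} = {b, c}" using ab bc cd by (auto simp: P_def wa wb wc wd)
    then show ?thesis using cw[of a] bc by (simp add: P_def)
  qed
  have cwb: "code w b = card (E b)"
  proof -
    have "{j\<in>P. b < j \<and> w j < w b} = {}" using ab bc cd by (auto simp: P_def wa wb wc wd)
    then show ?thesis using cw[of b] by (simp add: P_def)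
  qed
  have cwc: "code w c = card (E c)"
  proof -
    have "{j\<in>P. c < j \<and> w j < w c} = {}" using ab bc cd by (auto simp: P_def wa wb wc wd)
    then show ?thesis using cw[of c] by (simp add: P_def)
  qed
  have cwd: "code w d = card (E d)"
  proof -
    have "{j\<in>P. d < j \<and> w j < w d} = {}" using ab bc cd by (auto simp: P_def wa wb wc wd)
    then show ?thesis using cw[of d] by (simp add: P_def)
  qed
  define N where "N = supp_bound v + supp_bound w + d + 1"
  define Q where "Q = {1..<N} - P"
  have PN: "P \<subseteq> {1..<N}" using a1 ab bc cd by (auto simp: P_def N_def)
  have split: "mset_set {1..<N} = mset_set Q + {#a, b, c, d#}"
  proof -
    have "{1..<N} = Q \<union> P" using PN by (auto simp: Q_def)
    then have "mset_set {1..<N} = mset_set Q + mset_set P"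
      using mset_set_Union[of Q P] finP by (auto simp: Q_def)
    moreover have "mset_set P = {#a, b, c, d#}" using ab bc cd by (simp add: P_def)
    ultimately show ?thesis by simp
  qed
  define R where "R = image_mset (code v) (mset_set Q)"
  have Rw: "image_mset (code w) (mset_set Q) = R"
    unfolding R_def
  proof (rule image_mset_cong)
    fix k assume "k \<in># mset_set Q"
    then have "k \<notin> P" by (simp add: Q_def)
    then show "code w k = code v k"
      by (rule code_out) (use inPv inPw offw offv in auto)
  qed
  have Mv: "image_mset (code v) (mset_set {1..<N}) = R + {#card (E a), card (E b) + 1, card (E c) + 1, card (E d)#}"
    unfolding split by (simp add: R_def cva cvb cvc cvd)
  have Mw: "image_mset (code w) (mset_set {1..<N}) = R + {#card (E a) + 2, card (E b), card (E c), card (E d)#}"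
    unfolding split using Rw by (simp add: cwa cwb cwc cwd)
  have shv: "shape v = dsl (filter_mset (\<lambda>x. x \<noteq> 0) (image_mset (code v) (mset_set {1..<N})))"
    by (rule shape_eq[OF vS]) (simp add: N_def)
  have shw: "shape w = dsl (filter_mset (\<lambda>x. x \<noteq> 0) (image_mset (code w) (mset_set {1..<N})))"
    by (rule shape_eq[OF wS]) (simp add: N_def)
  show ?thesis unfolding shv shw
    by (rule final[OF _ _ Mv Mw]) (use Emono ab bc in \<open>auto intro: less_imp_le\<close>)
qed

lemma dominates_le_trans: "dominates_le x y \<Longrightarrow> dominates_le y z \<Longrightarrow> dominates_le x z"
  unfolding dominates_le_def by (metis le_trans)

theorem lemma3p29:
  assumes "z \<in> F_inf"
    and "v \<in> A_FPF z" and "w \<in> A_FPF z"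
    and "A_less v w"
  shows "dominates_less (shape v) (shape w)"
proof -
  have "dominates_le (shape v) (shape w) \<and>
         sum_list (map (\<lambda>x. x*x) (shape v)) < sum_list (map (\<lambda>x. x*x) (shape w))"
    using assms(4) unfolding A_less_def
  proof (induction rule: tranclp_induct)
    case (base y) then show ?case by (rule step)
  next
    case (step y z)
    have h: "dominates_le (shape y) (shape z) \<and>
         sum_list (map (\<lambda>x. x*x) (shape y)) < sum_list (map (\<lambda>x. x*x) (shape z))"
      by (rule Submission.step[OF step(2)])
    show ?case using step(3) h dominates_le_trans less_trans by meson
  qed
  then show ?thesis unfolding dominates_less_def by auto
qed


end
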